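(* Let $\mathcal C$ be a category with a class of cofibrations and a class of fibrations such that every map from a cofibrant object to a fibrant object factors both as a cofibration followed by an acyclic fibration and as an acyclic cofibration followed by a fibration, and such that every cofibration from a cofibrant object to a fibrant object admits a relative strong cylinder object. The following conditions are equivalent: (i) $\mathcal C$ is a weak model category, i.e. any fibration from a cofibrant object to a fibrant object admits a relative strong path object; (ii) if $A\overset{i}{\hookrightarrow}B\overset{j}{\hookrightarrow}C$ are two cofibrations between bifibrant objects such that $i$ and $j\circ i$ are acyclic, then $j$ is acyclic; (iii) there is a class $\mathcal J$ of acyclic cofibrations such that any map from a cofibrant object to a fibrant object factors as a map in $\mathcal J$ followed by a fibration, and condition (ii) holds when we further assume $i\in\mathcal J$.
   Context: A class of cofibrations: a class of maps with a cofibrant initial object $0$ ($X$ cofibrant iff $0\to X$ is a cofibration), containing isomorphisms with cofibrant domain, closed under composition, and such that pushouts of a cofibration $A\to B$ along $A\to C$ with $A,C$ cofibrant exist and $C\to C\sqcup_AB$ is a cofibration; a class of fibrations is the dual notion. Bifibrant = fibrant and cofibrant. Acyclic fibration: fibration with the right lifting property against all cofibrations between cofibrant objects; acyclic cofibration: cofibration with the left lifting property against all fibrations between fibrant objects. A relative strong cylinder object for a cofibration $A\to B$ is a factorization $B\sqcup_AB\to I_AB\to B$ of the codiagonal whose first map is a cofibration and whose restriction along the first inclusion of $B$ is an acyclic cofibration. A relative strong path object for a fibration $Y\to X$ is a factorization $Y\to P_XY\to Y\times_XY$ of the diagonal whose second map is a fibration and whose composite with the first projection is an acyclic fibration. A weak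 model category is a category with these classes satisfying the factorization condition, having relative strong cylinder objects for cofibrations from cofibrant to fibrant objects, and relative strong path objects for fibrations from cofibrant to fibrant objects. *)

theory Defs
  imports Main
begin

record ('o, 'm) cat =
  obj :: "'o set"
  arr :: "'m set"
  src :: "'m \<Rightarrow> 'o"
  tgt :: "'m \<Rightarrow> 'o"
  ident :: "'o \<Rightarrow> 'm"
  cmp :: "'m \<Rightarrow> 'm \<Rightarrow> 'm"   (* cmp C g f = g \<circ> f *)

definition hom :: "('o, 'm) cat \<Rightarrow> 'o \<Rightarrow> 'o \<Rightarrow> 'm set" where
  "hom C X Y = {f \<in> arr C. src C f = X \<and> tgt C f = Y}"

definition is_category :: "('o, 'm) cat \<Rightarrow> bool" where
  "is_category C \<longleftrightarrow>
     (\<forall>f\<in>arr C. src C f \<in> obj C \<and> tgt C f \<in> obj C) \<and>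
     (\<forall>X\<in>obj C. ident C X \<in> hom C X X) \<and>
     (\<forall>f\<in>arr C. \<forall>g\<in>arr C. tgt C f = src C g \<longrightarrow>
         cmp C g f \<in> hom C (src C f) (tgt C g)) \<and>
     (\<forall>f\<in>arr C. cmp C (ident C (tgt C f)) f = f \<and> cmp C f (ident C (src C f)) = f) \<and>
     (\<forall>f\<in>arr C. \<forall>g\<in>arr C. \<forall>h\<in>arr C. tgt C f = src C g \<and> tgt C g = src C h \<longrightarrow>
         cmp C h (cmp C g f) = cmp C (cmp C h g) f)"

definition iso :: "('o, 'm) cat \<Rightarrow> 'm \<Rightarrow> bool" where
  "iso C f \<longleftrightarrow> f \<in> arr C \<and>
     (\<exists>g\<in>hom C (tgt C f) (src C f).
        cmp C g f = ident C (src C f) \<and> cmp C f g = ident C (tgt C f))"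

definition initial :: "('o, 'm) cat \<Rightarrow> 'o \<Rightarrow> bool" where
  "initial C z \<longleftrightarrow> z \<in> obj C \<and> (\<forall>X\<in>obj C. \<exists>!f. f \<in> hom C z X)"

definition terminal :: "('o, 'm) cat \<Rightarrow> 'o \<Rightarrow> bool" where
  "terminal C t \<longleftrightarrow> t \<in> obj C \<and> (\<forall>X\<in>obj C. \<exists>!f. f \<in> hom C X t)"

text \<open>Pushout square: f : A \<rightarrow> B, g : A \<rightarrow> D, f' : D \<rightarrow> P (parallel to f),
  g' : B \<rightarrow> P (parallel to g), with g' f = f' g, universal.\<close>
definition is_pushout :: "('o, 'm) cat \<Rightarrow> 'm \<Rightarrow> 'm \<Rightarrow> 'm \<Rightarrow> 'm \<Rightarrow> bool" where
  "is_pushout C f g f' g' \<longleftrightarrow>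
     f \<in> arr C \<and> g \<in> arr C \<and> src C f = src C g \<and>
     f' \<in> hom C (tgt C g) (tgt C f') \<and> g' \<in> hom C (tgt C f) (tgt C f') \<and>
     cmp C g' f = cmp C f' g \<and>
     (\<forall>Q u v. u \<in> hom C (tgt C f) Q \<and> v \<in> hom C (tgt C g) Q \<and> cmp C u f = cmp C v g \<longrightarrow>
        (\<exists>!h. h \<in> hom C (tgt C f') Q \<and> cmp C h g' = u \<and> cmp C h f' = v))"

text \<open>Pullback square: f : Y \<rightarrow> X, g : Z \<rightarrow> X, f' : W \<rightarrow> Z (parallel to f),
  g' : W \<rightarrow> Y (parallel to g), with f g' = g f', universal.\<close>
definition is_pullback :: "('o, 'm) cat \<Rightarrow> 'm \<Rightarrow> 'm \<Rightarrow> 'm \<Rightarrow> 'm \<Rightarrow> bool" where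
  "is_pullback C f g f' g' \<longleftrightarrow>
     f \<in> arr C \<and> g \<in> arr C \<and> tgt C f = tgt C g \<and>
     f' \<in> hom C (src C f') (src C g) \<and> g' \<in> hom C (src C f') (src C f) \<and>
     cmp C f g' = cmp C g f' \<and>
     (\<forall>Q u v. u \<in> hom C Q (src C f) \<and> v \<in> hom C Q (src C g) \<and> cmp C f u = cmp C g v \<longrightarrow>
        (\<exists>!h. h \<in> hom C Q (src C f') \<and> cmp C g' h = u \<and> cmp C f' h = v))"

definition cofibrant :: "('o, 'm) cat \<Rightarrow> 'm set \<Rightarrow> 'o \<Rightarrow> bool" where
  "cofibrant C Cof X \<longleftrightarrow> X \<in> obj C \<and> (\<exists>z f. initial C z \<and> f \<in> hom C z X \<and> f \<in> Cof)"

definition fibrant :: "('o, 'm) cat \<Rightarrow> 'm set \<Rightarrow> 'o \<Rightarrow> bool" where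
  "fibrant C Fib X \<longleftrightarrow> X \<in> obj C \<and> (\<exists>t f. terminal C t \<and> f \<in> hom C X t \<and> f \<in> Fib)"

definition bifibrant :: "('o, 'm) cat \<Rightarrow> 'm set \<Rightarrow> 'm set \<Rightarrow> 'o \<Rightarrow> bool" where
  "bifibrant C Cof Fib X \<longleftrightarrow> cofibrant C Cof X \<and> fibrant C Fib X"

definition cofibration_class :: "('o, 'm) cat \<Rightarrow> 'm set \<Rightarrow> bool" where
  "cofibration_class C Cof \<longleftrightarrow>
     Cof \<subseteq> arr C \<and>
     (\<exists>z. initial C z \<and> ident C z \<in> Cof) \<and>
     (\<forall>f. iso C f \<and> cofibrant C Cof (src C f) \<longrightarrow> f \<in> Cof) \<and>
     (\<forall>f\<in>Cof. \<forall>g\<in>Cof. tgt C f = src C g \<longrightarrow> cmp C g f \<in> Cof) \<and>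
     (\<forall>i g. i \<in> Cof \<and> g \<in> arr C \<and> src C g = src C i \<and>
            cofibrant C Cof (src C i) \<and> cofibrant C Cof (tgt C g) \<longrightarrow>
        (\<exists>i' g'. is_pushout C i g i' g') \<and>
        (\<forall>i' g'. is_pushout C i g i' g' \<longrightarrow> i' \<in> Cof))"

definition fibration_class :: "('o, 'm) cat \<Rightarrow> 'm set \<Rightarrow> bool" where
  "fibration_class C Fib \<longleftrightarrow>
     Fib \<subseteq> arr C \<and>
     (\<exists>t. terminal C t \<and> ident C t \<in> Fib) \<and>
     (\<forall>f. iso C f \<and> fibrant C Fib (tgt C f) \<longrightarrow> f \<in> Fib) \<and>
     (\<forall>f\<in>Fib. \<forall>g\<in>Fib. tgt C f = src C g \<longrightarrow> cmp C g f \<in> Fib) \<and>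
     (\<forall>p g. p \<in> Fib \<and> g \<in> arr C \<and> tgt C g = tgt C p \<and>
            fibrant C Fib (tgt C p) \<and> fibrant C Fib (src C g) \<longrightarrow>
        (\<exists>p' g'. is_pullback C p g p' g') \<and>
        (\<forall>p' g'. is_pullback C p g p' g' \<longrightarrow> p' \<in> Fib))"

definition llp :: "('o, 'm) cat \<Rightarrow> 'm \<Rightarrow> 'm \<Rightarrow> bool" where
  "llp C i p \<longleftrightarrow> i \<in> arr C \<and> p \<in> arr C \<and>
     (\<forall>u v. u \<in> hom C (src C i) (src C p) \<and> v \<in> hom C (tgt C i) (tgt C p) \<and>
            cmp C p u = cmp C v i \<longrightarrow>
        (\<exists>h\<in>hom C (tgt C i) (src C p). cmp C h i = u \<and> cmp C p h = v))"

definition acyclic_fib :: "('o, 'm) cat \<Rightarrow> 'm set \<Rightarrow> 'm set \<Rightarrow> 'm \<Rightarrow> bool" where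
  "acyclic_fib C Cof Fib p \<longleftrightarrow> p \<in> Fib \<and>
     (\<forall>i\<in>Cof. cofibrant C Cof (src C i) \<and> cofibrant C Cof (tgt C i) \<longrightarrow> llp C i p)"

definition acyclic_cof :: "('o, 'm) cat \<Rightarrow> 'm set \<Rightarrow> 'm set \<Rightarrow> 'm \<Rightarrow> bool" where
  "acyclic_cof C Cof Fib i \<longleftrightarrow> i \<in> Cof \<and>
     (\<forall>p\<in>Fib. fibrant C Fib (src C p) \<and> fibrant C Fib (tgt C p) \<longrightarrow> llp C i p)"

definition factorization_condition :: "('o, 'm) cat \<Rightarrow> 'm set \<Rightarrow> 'm set \<Rightarrow> bool" where
  "factorization_condition C Cof Fib \<longleftrightarrow>
     (\<forall>f\<in>arr C. cofibrant C Cof (src C f) \<and> fibrant C Fib (tgt C f) \<longrightarrow>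
        (\<exists>i p. i \<in> Cof \<and> acyclic_fib C Cof Fib p \<and> tgt C i = src C p \<and> f = cmp C p i) \<and>
        (\<exists>j q. acyclic_cof C Cof Fib j \<and> q \<in> Fib \<and> tgt C j = src C q \<and> f = cmp C q j))"

text \<open>Relative strong cylinder object for a cofibration i : A \<rightarrow> B: a pushout
  B \<sqcup>_A B with inclusions in1, in2, and a factorization q \<circ> k of the codiagonal,
  k a cofibration, k \<circ> in1 an acyclic cofibration.\<close>
definition has_rel_strong_cylinder :: "('o, 'm) cat \<Rightarrow> 'm set \<Rightarrow> 'm set \<Rightarrow> 'm \<Rightarrow> bool" where
  "has_rel_strong_cylinder C Cof Fib i \<longleftrightarrow>
     (\<exists>in1 in2 k q. is_pushout C i i in2 in1 \<and>
        k \<in> arr C \<and> src C k = tgt C in1 \<and> q \<in> hom C (tgt C k) (tgt C i) \<and>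
        k \<in> Cof \<and>
        cmp C q (cmp C k in1) = ident C (tgt C i) \<and>
        cmp C q (cmp C k in2) = ident C (tgt C i) \<and>
        acyclic_cof C Cof Fib (cmp C k in1))"

text \<open>Relative strong path object for a fibration p : Y \<rightarrow> X: a pullback
  Y \<times>_X Y with projections pr1, pr2, and a factorization k \<circ> s of the diagonal,
  k a fibration, pr1 \<circ> k an acyclic fibration.\<close>
definition has_rel_strong_path :: "('o, 'm) cat \<Rightarrow> 'm set \<Rightarrow> 'm set \<Rightarrow> 'm \<Rightarrow> bool" where
  "has_rel_strong_path C Cof Fib p \<longleftrightarrow>
     (\<exists>pr1 pr2 s k. is_pullback C p p pr2 pr1 \<and>
        k \<in> arr C \<and> tgt C k = src C pr1 \<and> s \<in> hom C (src C p) (src C k) \<and>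
        k \<in> Fib \<and>
        cmp C pr1 (cmp C k s) = ident C (src C p) \<and>
        cmp C pr2 (cmp C k s) = ident C (src C p) \<and>
        acyclic_fib C Cof Fib (cmp C pr1 k))"

end

theory Submission
  imports Defs
begin


lemma hom_iff: "f \<in> hom C X Y \<longleftrightarrow> f \<in> arr C \<and> src C f = X \<and> tgt C f = Y"
  by (simp add: hom_def)

lemma llpE:
  "llp C i p \<Longrightarrow> u \<in> hom C (src C i) (src C p) \<Longrightarrow> v \<in> hom C (tgt C i) (tgt C p) \<Longrightarrow>
   cmp C p u = cmp C v i \<Longrightarrow> \<exists>h\<in>hom C (tgt C i) (src C p). cmp C h i = u \<and> cmp C p h = v"
  by (simp add: llp_def)

lemma acof_lift:
  "acyclic_cof C Cof Fib i \<Longrightarrow> p \<in> Fib \<Longrightarrow> fibrant C Fib (src C p) \<Longrightarrow> fibrant C Fib (tgt C p) \<Longrightarrow>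
   u \<in> hom C (src C i) (src C p) \<Longrightarrow> v \<in> hom C (tgt C i) (tgt C p) \<Longrightarrow>
   cmp C p u = cmp C v i \<Longrightarrow> \<exists>h\<in>hom C (tgt C i) (src C p). cmp C h i = u \<and> cmp C p h = v"
  unfolding acyclic_cof_def by (meson llpE)

lemma afib_lift:
  "acyclic_fib C Cof Fib p \<Longrightarrow> i \<in> Cof \<Longrightarrow> cofibrant C Cof (src C i) \<Longrightarrow> cofibrant C Cof (tgt C i) \<Longrightarrow>
   u \<in> hom C (src C i) (src C p) \<Longrightarrow> v \<in> hom C (tgt C i) (tgt C p) \<Longrightarrow>
   cmp C p u = cmp C v i \<Longrightarrow> \<exists>h\<in>hom C (tgt C i) (src C p). cmp C h i = u \<and> cmp C p h = v"
  unfolding acyclic_fib_def by (meson llpE)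

locale setting =
  fixes C :: "('o, 'm) cat" and Cof Fib :: "'m set"
  assumes cat: "is_category C" and cof: "cofibration_class C Cof" and fib: "fibration_class C Fib"
begin

lemma cmp_arr[simp]: "f \<in> arr C \<Longrightarrow> g \<in> arr C \<Longrightarrow> tgt C f = src C g \<Longrightarrow> cmp C g f \<in> arr C"
  using cat unfolding is_category_def hom_def by blast
lemma cmp_src[simp]: "f \<in> arr C \<Longrightarrow> g \<in> arr C \<Longrightarrow> tgt C f = src C g \<Longrightarrow> src C (cmp C g f) = src C f"
  using cat unfolding is_category_def hom_def by blast
lemma cmp_tgt[simp]: "f \<in> arr C \<Longrightarrow> g \<in> arr C \<Longrightarrow> tgt C f = src C g \<Longrightarrow> tgt C (cmp C g f) = tgt C g"
  using cat unfolding is_category_def hom_def by blast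
lemma assoc: "f \<in> arr C \<Longrightarrow> g \<in> arr C \<Longrightarrow> h \<in> arr C \<Longrightarrow> tgt C f = src C g \<Longrightarrow> tgt C g = src C h \<Longrightarrow>
   cmp C (cmp C h g) f = cmp C h (cmp C g f)"
  using cat unfolding is_category_def by metis
lemma src_obj[simp]: "f \<in> arr C \<Longrightarrow> src C f \<in> obj C"
  using cat unfolding is_category_def by blast
lemma tgt_obj[simp]: "f \<in> arr C \<Longrightarrow> tgt C f \<in> obj C"
  using cat unfolding is_category_def by blast
lemma id_arr[simp]: "X \<in> obj C \<Longrightarrow> ident C X \<in> arr C"
  using cat unfolding is_category_def hom_def by blast
lemma id_src[simp]: "X \<in> obj C \<Longrightarrow> src C (ident C X) = X"
  using cat unfolding is_category_def hom_def by blast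
lemma id_tgt[simp]: "X \<in> obj C \<Longrightarrow> tgt C (ident C X) = X"
  using cat unfolding is_category_def hom_def by blast
lemma id_l: "f \<in> arr C \<Longrightarrow> tgt C f = X \<Longrightarrow> cmp C (ident C X) f = f"
  using cat unfolding is_category_def by blast
lemma id_r: "f \<in> arr C \<Longrightarrow> src C f = X \<Longrightarrow> cmp C f (ident C X) = f"
  using cat unfolding is_category_def by blast

lemma cmp_hom: "f \<in> hom C X Y \<Longrightarrow> g \<in> hom C Y Z \<Longrightarrow> cmp C g f \<in> hom C X Z"
  by (simp add: hom_def)

lemma Cof_arr: "i \<in> Cof \<Longrightarrow> i \<in> arr C" using cof unfolding cofibration_class_def by blast
lemma Fib_arr: "i \<in> Fib \<Longrightarrow> i \<in> arr C" using fib unfolding fibration_class_def by blast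
lemma Cof_cmp: "f \<in> Cof \<Longrightarrow> g \<in> Cof \<Longrightarrow> tgt C f = src C g \<Longrightarrow> cmp C g f \<in> Cof"
  using cof unfolding cofibration_class_def by blast
lemma Fib_cmp: "f \<in> Fib \<Longrightarrow> g \<in> Fib \<Longrightarrow> tgt C f = src C g \<Longrightarrow> cmp C g f \<in> Fib"
  using fib unfolding fibration_class_def by blast

lemma fibrant_src: "fibrant C Fib X \<Longrightarrow> p \<in> Fib \<Longrightarrow> tgt C p = X \<Longrightarrow> fibrant C Fib (src C p)"
proof -
  assume X: "fibrant C Fib X" and p: "p \<in> Fib" "tgt C p = X"
  then obtain t f where t: "terminal C t" "f \<in> hom C X t" "f \<in> Fib" unfolding fibrant_def by blast
  have "cmp C f p \<in> Fib" using Fib_cmp p t by (simp add: hom_def)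
  moreover have "cmp C f p \<in> hom C (src C p) t" using p t Fib_arr by (simp add: hom_def)
  ultimately show ?thesis using t p Fib_arr unfolding fibrant_def by auto
qed

lemma cofibrant_tgt: "cofibrant C Cof X \<Longrightarrow> i \<in> Cof \<Longrightarrow> src C i = X \<Longrightarrow> cofibrant C Cof (tgt C i)"
proof -
  assume X: "cofibrant C Cof X" and p: "i \<in> Cof" "src C i = X"
  then obtain z f where t: "initial C z" "f \<in> hom C z X" "f \<in> Cof" unfolding cofibrant_def by blast
  have "cmp C i f \<in> Cof" using Cof_cmp p t by (simp add: hom_def)
  moreover have "cmp C i f \<in> hom C z (tgt C i)" using p t Cof_arr by (simp add: hom_def)
  ultimately show ?thesis using t p Cof_arr unfolding cofibrant_def by auto
qed

lemma pb_sym: "is_pullback C p p a b \<Longrightarrow> is_pullback C p p b a"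
proof -
  assume pb: "is_pullback C p p a b"
  have d: "p \<in> arr C" "a \<in> hom C (src C a) (src C p)" "b \<in> hom C (src C a) (src C p)"
    "cmp C p b = cmp C p a"
    using pb unfolding is_pullback_def by auto
  have U: "\<exists>!h. h \<in> hom C Q (src C a) \<and> cmp C b h = u \<and> cmp C a h = v"
    if "u \<in> hom C Q (src C p)" "v \<in> hom C Q (src C p)" "cmp C p u = cmp C p v" for Q u v
    using pb that unfolding is_pullback_def by blast
  have sab: "src C b = src C a" using d by (simp add: hom_def)
  show ?thesis unfolding is_pullback_def
  proof (intro conjI allI impI)
    fix Q u v assume "u \<in> hom C Q (src C p) \<and> v \<in> hom C Q (src C p) \<and> cmp C p u = cmp C p v"
    then have "\<exists>!h. h \<in> hom C Q (src C a) \<and> cmp C b h = v \<and> cmp C a h = u" using U by metis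
    then show "\<exists>!h. h \<in> hom C Q (src C b) \<and> cmp C a h = u \<and> cmp C b h = v" using sab by metis
  qed (use d sab in auto)
qed

lemma pb_ex: "is_pullback C f g f' g' \<Longrightarrow> u \<in> hom C Q (src C f) \<Longrightarrow> v \<in> hom C Q (src C g) \<Longrightarrow>
   cmp C f u = cmp C g v \<Longrightarrow> \<exists>h. h \<in> hom C Q (src C f') \<and> cmp C g' h = u \<and> cmp C f' h = v"
  unfolding is_pullback_def by blast

lemma pb_uniq: "is_pullback C f g f' g' \<Longrightarrow> h1 \<in> hom C Q (src C f') \<Longrightarrow> h2 \<in> hom C Q (src C f') \<Longrightarrow>
   cmp C g' h1 = cmp C g' h2 \<Longrightarrow> cmp C f' h1 = cmp C f' h2 \<Longrightarrow> h1 = h2"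
proof -
  assume pb: "is_pullback C f g f' g'" and h: "h1 \<in> hom C Q (src C f')" "h2 \<in> hom C Q (src C f')"
    and e: "cmp C g' h1 = cmp C g' h2" "cmp C f' h1 = cmp C f' h2"
  have d: "f \<in> arr C" "g \<in> arr C" "f' \<in> hom C (src C f') (src C g)" "g' \<in> hom C (src C f') (src C f)"
    "cmp C f g' = cmp C g f'"
    using pb unfolding is_pullback_def by auto
  have u: "cmp C g' h1 \<in> hom C Q (src C f)" using d h by (simp add: hom_def)
  have v: "cmp C f' h1 \<in> hom C Q (src C g)" using d h by (simp add: hom_def)
  have "cmp C f (cmp C g' h1) = cmp C g (cmp C f' h1)"
    using d h by (simp add: hom_def flip: assoc)
  then have "\<exists>!h. h \<in> hom C Q (src C f') \<and> cmp C g' h = cmp C g' h1 \<and> cmp C f' h = cmp C f' h1"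
    using pb u v unfolding is_pullback_def by blast
  then show ?thesis using h e by metis
qed

lemma po_ex: "is_pushout C f g f' g' \<Longrightarrow> u \<in> hom C (tgt C f) Q \<Longrightarrow> v \<in> hom C (tgt C g) Q \<Longrightarrow>
   cmp C u f = cmp C v g \<Longrightarrow> \<exists>h. h \<in> hom C (tgt C f') Q \<and> cmp C h g' = u \<and> cmp C h f' = v"
  unfolding is_pushout_def by blast

lemma po_uniq: "is_pushout C f g f' g' \<Longrightarrow> h1 \<in> hom C (tgt C f') Q \<Longrightarrow> h2 \<in> hom C (tgt C f') Q \<Longrightarrow>
   cmp C h1 g' = cmp C h2 g' \<Longrightarrow> cmp C h1 f' = cmp C h2 f' \<Longrightarrow> h1 = h2"
proof -
  assume pb: "is_pushout C f g f' g'" and h: "h1 \<in> hom C (tgt C f') Q" "h2 \<in> hom C (tgt C f') Q"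
    and e: "cmp C h1 g' = cmp C h2 g'" "cmp C h1 f' = cmp C h2 f'"
  have d: "f \<in> arr C" "g \<in> arr C" "f' \<in> hom C (tgt C g) (tgt C f')" "g' \<in> hom C (tgt C f) (tgt C f')"
    "cmp C g' f = cmp C f' g" "src C f = src C g"
    using pb unfolding is_pushout_def by auto
  have u: "cmp C h1 g' \<in> hom C (tgt C f) Q" using d h by (simp add: hom_def)
  have v: "cmp C h1 f' \<in> hom C (tgt C g) Q" using d h by (simp add: hom_def)
  have "cmp C (cmp C h1 g') f = cmp C (cmp C h1 f') g"
    using d h by (simp add: hom_def assoc)
  then have "\<exists>!h. h \<in> hom C (tgt C f') Q \<and> cmp C h g' = cmp C h1 g' \<and> cmp C h f' = cmp C h1 f'"
    using pb u v unfolding is_pushout_def by blast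
  then show ?thesis using h e by metis
qed

end


context setting
begin

lemma core:
  assumes p: "p \<in> Fib" "fibrant C Fib (src C p)" "fibrant C Fib (tgt C p)"
    and path: "has_rel_strong_path C Cof Fib p"
    and i: "acyclic_cof C Cof Fib i"
    and j: "j \<in> Cof" "tgt C i = src C j" "cofibrant C Cof (src C j)" "cofibrant C Cof (tgt C j)"
    and ji: "acyclic_cof C Cof Fib (cmp C j i)"
    and u: "u \<in> hom C (src C j) (src C p)" and v: "v \<in> hom C (tgt C j) (tgt C p)"
    and sq: "cmp C p u = cmp C v j"
  shows "\<exists>h\<in>hom C (tgt C j) (src C p). cmp C h j = u \<and> cmp C p h = v"
proof -
  obtain pr1 pr2 s k where pb: "is_pullback C p p pr2 pr1" and k: "k \<in> arr C" "tgt C k = src C pr1"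
    and s: "s \<in> hom C (src C p) (src C k)" and kF: "k \<in> Fib"
    and e1: "cmp C pr1 (cmp C k s) = ident C (src C p)"
    and e2: "cmp C pr2 (cmp C k s) = ident C (src C p)"
    and af: "acyclic_fib C Cof Fib (cmp C pr1 k)"
    using path unfolding has_rel_strong_path_def by blast
  have pr: "pr2 \<in> hom C (src C pr1) (src C p)" "pr1 \<in> hom C (src C pr1) (src C p)"
    "cmp C p pr1 = cmp C p pr2" "p \<in> arr C"
    using pb unfolding is_pullback_def hom_def by auto
  have iC: "i \<in> Cof" "i \<in> arr C" using i Cof_arr unfolding acyclic_cof_def by auto
  have jA: "j \<in> arr C" using j Cof_arr by auto
  have pr1F: "pr1 \<in> Fib" using fib pb_sym[OF pb] p(1) p(2) p(3) Fib_arr unfolding fibration_class_def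
    by blast
  have Wf: "fibrant C Fib (src C pr1)" using fibrant_src[OF p(2) pr1F] pr by (simp add: hom_def)
  have qF: "cmp C pr1 k \<in> Fib" using af unfolding acyclic_fib_def by auto
  have Pf: "fibrant C Fib (src C k)" using fibrant_src[OF p(2) qF] pr k by (simp add: hom_def)
  note H = pr iC jA k s u v j(2)
  have tji: "tgt C (cmp C j i) = tgt C j" "src C (cmp C j i) = src C i" using H by auto
  have "cmp C u i \<in> hom C (src C (cmp C j i)) (src C p)"
     "v \<in> hom C (tgt C (cmp C j i)) (tgt C p)" using H tji by (auto simp: hom_def)
  moreover have "cmp C p (cmp C u i) = cmp C v (cmp C j i)"
    using H by (simp add: hom_def sq flip: assoc)
  ultimately have "\<exists>h\<in>hom C (tgt C (cmp C j i)) (src C p). cmp C h (cmp C j i) = cmp C u i \<and> cmp C p h = v"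
    by (rule acof_lift[OF ji p(1) p(2) p(3)])
  then obtain h0 where h0: "h0 \<in> hom C (tgt C j) (src C p)" "cmp C h0 (cmp C j i) = cmp C u i"
    "cmp C p h0 = v" unfolding tji by blast
  have "cmp C p (cmp C h0 j) = cmp C p u"
    using H h0 by (simp add: hom_def sq flip: assoc)
  then obtain m where m: "m \<in> hom C (src C j) (src C pr1)" "cmp C pr1 m = cmp C h0 j" "cmp C pr2 m = u"
    using pb_ex[OF pb, of "cmp C h0 j" "src C j" u] H h0 by (auto simp: hom_def)
  have "cmp C k (cmp C s (cmp C u i)) = cmp C m i"
  proof (rule pb_uniq[OF pb])
    show "cmp C k (cmp C s (cmp C u i)) \<in> hom C (src C i) (src C pr2)"
      using H by (auto simp: hom_def)
    show "cmp C m i \<in> hom C (src C i) (src C pr2)" using H m by (auto simp: hom_def)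
    have "cmp C pr1 (cmp C k (cmp C s (cmp C u i))) = cmp C (cmp C pr1 (cmp C k s)) (cmp C u i)"
      using H by (simp add: hom_def assoc)
    also have "\<dots> = cmp C u i" using e1 H by (simp add: hom_def id_l)
    also have "\<dots> = cmp C (cmp C h0 j) i" using h0 H by (simp add: hom_def assoc)
    also have "\<dots> = cmp C pr1 (cmp C m i)" using m H by (simp add: hom_def flip: assoc)
    finally show "cmp C pr1 (cmp C k (cmp C s (cmp C u i))) = cmp C pr1 (cmp C m i)" .
    have "cmp C pr2 (cmp C k (cmp C s (cmp C u i))) = cmp C (cmp C pr2 (cmp C k s)) (cmp C u i)"
      using H by (simp add: hom_def assoc)
    also have "\<dots> = cmp C u i" using e2 H by (simp add: hom_def id_l)
    also have "\<dots> = cmp C pr2 (cmp C m i)" using m H by (simp add: hom_def flip: assoc)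
    finally show "cmp C pr2 (cmp C k (cmp C s (cmp C u i))) = cmp C pr2 (cmp C m i)" .
  qed
  moreover have "cmp C s (cmp C u i) \<in> hom C (src C i) (src C k)" using H by (auto simp: hom_def)
  moreover have "m \<in> hom C (tgt C i) (tgt C k)" using H m by (auto simp: hom_def)
  ultimately obtain HH where HH: "HH \<in> hom C (tgt C i) (src C k)" "cmp C HH i = cmp C s (cmp C u i)"
    "cmp C k HH = m"
    using acof_lift[OF i kF Pf] Wf k by auto
  have "cmp C (cmp C pr1 k) HH = cmp C h0 j" using HH m H by (simp add: hom_def assoc)
  moreover have "HH \<in> hom C (src C j) (src C (cmp C pr1 k))" using HH H by (auto simp: hom_def)
  moreover have "h0 \<in> hom C (tgt C j) (tgt C (cmp C pr1 k))" using h0 H by (auto simp: hom_def)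
  ultimately obtain H' where H': "H' \<in> hom C (tgt C j) (src C (cmp C pr1 k))" "cmp C H' j = HH"
    "cmp C (cmp C pr1 k) H' = h0"
    using afib_lift[OF af j(1) j(3) j(4)] by blast
  define h where "h = cmp C pr2 (cmp C k H')"
  have hh: "h \<in> hom C (tgt C j) (src C p)" using H' H unfolding h_def by (auto simp: hom_def)
  have "cmp C h j = cmp C pr2 (cmp C k (cmp C H' j))" using H' H unfolding h_def by (auto simp: hom_def assoc)
  also have "\<dots> = u" using H' HH m by simp
  finally have 1: "cmp C h j = u" .
  have "cmp C p h = cmp C (cmp C p pr2) (cmp C k H')" using H' H unfolding h_def by (auto simp: hom_def assoc)
  also have "\<dots> = cmp C (cmp C p pr1) (cmp C k H')" using pr by simp
  also have "\<dots> = cmp C p (cmp C (cmp C pr1 k) H')" using H'(1) pr(1,2,4) iC jA k s u v j(2) by (auto simp: hom_def assoc)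
  also have "\<dots> = v" using H' h0 by simp
  finally show ?thesis using hh 1 by blast
qed

end


context setting
begin

lemma reduce:
  assumes pathall: "\<forall>p\<in>Fib. cofibrant C Cof (src C p) \<and> fibrant C Fib (tgt C p) \<longrightarrow>
              has_rel_strong_path C Cof Fib p"
    and fact: "factorization_condition C Cof Fib"
    and i: "acyclic_cof C Cof Fib i"
    and j: "j \<in> Cof" "tgt C i = src C j" "cofibrant C Cof (src C j)" "cofibrant C Cof (tgt C j)"
    and ji: "acyclic_cof C Cof Fib (cmp C j i)"
    and p: "p \<in> Fib" "fibrant C Fib (src C p)" "fibrant C Fib (tgt C p)"
  shows "llp C j p"
  unfolding llp_def
proof (intro conjI allI impI)
  show jA: "j \<in> arr C" using j Cof_arr by auto
  show pA: "p \<in> arr C" using p Fib_arr by auto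
  fix u v
  assume sq0: "u \<in> hom C (src C j) (src C p) \<and> v \<in> hom C (tgt C j) (tgt C p) \<and> cmp C p u = cmp C v j"
  then have u: "u \<in> hom C (src C j) (src C p)" and v: "v \<in> hom C (tgt C j) (tgt C p)"
    and sq: "cmp C p u = cmp C v j" by auto
  have "v \<in> arr C" "cofibrant C Cof (src C v)" "fibrant C Fib (tgt C v)" using v j p by (auto simp: hom_def)
  then obtain c a where c: "c \<in> Cof" and a: "acyclic_fib C Cof Fib a" and ca: "tgt C c = src C a"
    and vca: "v = cmp C a c"
    using fact unfolding factorization_condition_def by blast
  have aF: "a \<in> Fib" using a unfolding acyclic_fib_def by auto
  have cA: "c \<in> arr C" and aA: "a \<in> arr C" using c aF Cof_arr Fib_arr by auto
  have sc: "src C c = tgt C j" and ta: "tgt C a = tgt C p" using v vca cA aA ca by (auto simp: hom_def)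
  have X'f: "fibrant C Fib (src C a)" using fibrant_src[OF p(3) aF ta] .
  obtain p' a' where pb: "is_pullback C p a p' a'" and p'F: "p' \<in> Fib"
    using fib aF aA ta p X'f unfolding fibration_class_def by metis
  have pbd: "p' \<in> hom C (src C p') (src C a)" "a' \<in> hom C (src C p') (src C p)"
    "cmp C p a' = cmp C a p'" using pb unfolding is_pullback_def by auto
  have Y'f: "fibrant C Fib (src C p')" using fibrant_src[OF X'f p'F] pbd by (simp add: hom_def)
  have "cmp C p u = cmp C a (cmp C c j)" using sq vca cA aA jA ca sc by (simp add: assoc)
  moreover have "cmp C c j \<in> hom C (src C j) (src C a)" using cA jA ca sc by (simp add: hom_def)
  ultimately obtain n where n: "n \<in> hom C (src C j) (src C p')" "cmp C a' n = u" "cmp C p' n = cmp C c j"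
    using pb_ex[OF pb u] by blast
  have "n \<in> arr C" "cofibrant C Cof (src C n)" "fibrant C Fib (tgt C n)" using n j Y'f by (auto simp: hom_def)
  then obtain e b where e: "e \<in> Cof" and b: "acyclic_fib C Cof Fib b" and eb: "tgt C e = src C b"
    and neb: "n = cmp C b e"
    using fact unfolding factorization_condition_def by blast
  have bF: "b \<in> Fib" using b unfolding acyclic_fib_def by auto
  have eA: "e \<in> arr C" and bA: "b \<in> arr C" using e bF Cof_arr Fib_arr by auto
  have se: "src C e = src C j" and tb: "tgt C b = src C p'" using n neb eA bA eb by (auto simp: hom_def)
  have p'A: "p' \<in> arr C" using p'F Fib_arr by auto
  define p'' where "p'' = cmp C p' b"
  have p''F: "p'' \<in> Fib" unfolding p''_def using Fib_cmp[OF bF p'F tb] .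
  have sp'': "src C p'' = tgt C e" and tp'': "tgt C p'' = src C a"
    unfolding p''_def using bA p'A tb eb pbd by (auto simp: hom_def)
  have Y''c: "cofibrant C Cof (src C p'')" unfolding sp'' using cofibrant_tgt[OF j(3) e se] .
  have Y''f: "fibrant C Fib (src C p'')" unfolding sp'' eb using fibrant_src[OF Y'f bF tb] .
  have X'f': "fibrant C Fib (tgt C p'')" unfolding tp'' by (rule X'f)
  have path: "has_rel_strong_path C Cof Fib p''" using pathall p''F Y''c X'f' by blast
  have eh: "e \<in> hom C (src C j) (src C p'')" using eA se sp'' by (simp add: hom_def)
  have ch: "c \<in> hom C (tgt C j) (tgt C p'')" using cA sc tp'' ca by (simp add: hom_def)
  have "cmp C p'' e = cmp C c j" unfolding p''_def using bA p'A eA tb eb n(3) neb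
    by (simp add: assoc)
  then obtain h'' where h'': "h'' \<in> hom C (tgt C j) (src C p'')" "cmp C h'' j = e" "cmp C p'' h'' = c"
    using core[OF p''F Y''f X'f' path i j ji eh ch] by blast
  define h where "h = cmp C a' (cmp C b h'')"
  have a'A: "a' \<in> arr C" "src C a' = src C p'" "tgt C a' = src C p" using pbd by (auto simp: hom_def)
  have h''A: "h'' \<in> arr C" "src C h'' = tgt C j" "tgt C h'' = tgt C e" using h'' sp'' by (auto simp: hom_def)
  have "h \<in> hom C (tgt C j) (src C p)" unfolding h_def using a'A h''A bA tb eb by (simp add: hom_def)
  moreover have "cmp C h j = u" unfolding h_def using a'A h''A bA tb eb jA
    by (simp add: assoc h''(2) flip: neb n(2))
  moreover have "cmp C p h = v"
  proof -
    have "cmp C p h = cmp C (cmp C p a') (cmp C b h'')" unfolding h_def using a'A h''A bA tb eb pA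
      by (simp add: assoc)
    also have "\<dots> = cmp C a (cmp C (cmp C p' b) h'')" unfolding pbd(3) using a'A h''A bA tb eb pA aA p'A pbd
      by (simp add: assoc hom_def)
    also have "\<dots> = v" using h''(3) vca unfolding p''_def by simp
    finally show ?thesis .
  qed
  ultimately show "\<exists>h\<in>hom C (tgt C j) (src C p). cmp C h j = u \<and> cmp C p h = v" by blast
qed

end


context setting
begin

lemma section_acyclic:
  assumes cylall: "\<forall>i\<in>Cof. cofibrant C Cof (src C i) \<and> fibrant C Fib (tgt C i) \<longrightarrow>
                has_rel_strong_cylinder C Cof Fib i"
    and w: "w \<in> Cof" "cofibrant C Cof (src C w)" "fibrant C Fib (tgt C w)"
    and a: "acyclic_fib C Cof Fib a" "a \<in> hom C (tgt C w) (src C w)" "cmp C a w = ident C (src C w)"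
  shows "acyclic_cof C Cof Fib w"
proof -
  obtain in1 in2 k q where po: "is_pushout C w w in2 in1" and kA: "k \<in> arr C" and sk: "src C k = tgt C in1"
    and q: "q \<in> hom C (tgt C k) (tgt C w)" and kC: "k \<in> Cof"
    and q1: "cmp C q (cmp C k in1) = ident C (tgt C w)"
    and q2: "cmp C q (cmp C k in2) = ident C (tgt C w)"
    and ac: "acyclic_cof C Cof Fib (cmp C k in1)"
    using cylall w unfolding has_rel_strong_cylinder_def by blast
  have wA: "w \<in> arr C" using w Cof_arr by auto
  have pod: "in2 \<in> hom C (tgt C w) (tgt C in2)" "in1 \<in> hom C (tgt C w) (tgt C in2)"
    "cmp C in1 w = cmp C in2 w" using po unfolding is_pushout_def by auto
  have inA: "in1 \<in> arr C" "in2 \<in> arr C" "src C in1 = tgt C w" "src C in2 = tgt C w" "tgt C in1 = tgt C in2"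
    using pod by (auto simp: hom_def)
  have aA: "a \<in> arr C" "src C a = tgt C w" "tgt C a = src C w" using a by (auto simp: hom_def)
  have qA: "q \<in> arr C" "src C q = tgt C k" "tgt C q = tgt C w" using q by (auto simp: hom_def)
  have Pc: "cofibrant C Cof (tgt C w)" using cofibrant_tgt[OF w(2) w(1)] by simp
  have in2C: "in2 \<in> Cof"
  proof -
    have "\<forall>i g. i \<in> Cof \<and> g \<in> arr C \<and> src C g = src C i \<and>
            cofibrant C Cof (src C i) \<and> cofibrant C Cof (tgt C g) \<longrightarrow>
        (\<forall>i' g'. is_pushout C i g i' g' \<longrightarrow> i' \<in> Cof)"
      using cof unfolding cofibration_class_def by blast
    then show ?thesis using wA w(1,2) Pc po by blast
  qed
  have Qc: "cofibrant C Cof (src C k)" using cofibrant_tgt[OF Pc in2C] inA sk by simp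
  have Ic: "cofibrant C Cof (tgt C k)" using cofibrant_tgt[OF Qc kC] by simp
  have Pobj: "tgt C w \<in> obj C" "src C w \<in> obj C" using wA by auto
  have "cmp C (cmp C w a) w = cmp C (ident C (tgt C w)) w"
    using wA aA a(3) Pobj by (simp add: assoc id_l id_r)
  moreover have "cmp C w a \<in> hom C (tgt C w) (tgt C w)" "ident C (tgt C w) \<in> hom C (tgt C w) (tgt C w)"
    using wA aA Pobj by (auto simp: hom_def)
  ultimately obtain T where T: "T \<in> hom C (tgt C in2) (tgt C w)" "cmp C T in1 = cmp C w a"
    "cmp C T in2 = ident C (tgt C w)"
    using po_ex[OF po] by blast
  have TA: "T \<in> arr C" "src C T = tgt C in2" "tgt C T = tgt C w" using T by (auto simp: hom_def)
  have aT: "cmp C a T = cmp C (cmp C a q) k"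
  proof (rule po_uniq[OF po])
    show "cmp C a T \<in> hom C (tgt C in2) (src C w)" using TA aA by (simp add: hom_def)
    show "cmp C (cmp C a q) k \<in> hom C (tgt C in2) (src C w)" using kA sk inA qA aA by (simp add: hom_def)
    have "cmp C (cmp C a T) in1 = cmp C a (cmp C w a)" using TA aA inA wA Pobj
      by (simp add: assoc T(2))
    also have "\<dots> = cmp C (cmp C a w) a" using aA wA by (simp add: assoc)
    also have "\<dots> = a" using aA by (simp add: a(3) id_l)
    finally have "cmp C (cmp C a T) in1 = a" .
    moreover have "cmp C (cmp C (cmp C a q) k) in1 = a" using kA sk inA qA aA
      by (simp add: assoc q1 id_r)
    ultimately show "cmp C (cmp C a T) in1 = cmp C (cmp C (cmp C a q) k) in1" by simp
    have "cmp C (cmp C a T) in2 = a" using TA aA inA wA Pobj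
      by (simp add: assoc T(3) id_r)
    moreover have "cmp C (cmp C (cmp C a q) k) in2 = a" using kA sk inA qA aA
      by (simp add: assoc q2 id_r)
    ultimately show "cmp C (cmp C a T) in2 = cmp C (cmp C (cmp C a q) k) in2" by simp
  qed
  have "T \<in> hom C (src C k) (src C a)" "cmp C a q \<in> hom C (tgt C k) (tgt C a)"
    using TA sk inA aA qA by (auto simp: hom_def)
  then obtain H where H: "H \<in> hom C (tgt C k) (src C a)" "cmp C H k = T" "cmp C a H = cmp C a q"
    using afib_lift[OF a(1) kC Qc Ic _ _ aT] by blast
  have HA: "H \<in> arr C" "src C H = tgt C k" "tgt C H = tgt C w" using H aA by (auto simp: hom_def)
  show ?thesis unfolding acyclic_cof_def
  proof (intro conjI ballI impI)
    show "w \<in> Cof" by (rule w(1))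
    fix f assume fF: "f \<in> Fib" and ff: "fibrant C Fib (src C f) \<and> fibrant C Fib (tgt C f)"
    show "llp C w f" unfolding llp_def
    proof (intro conjI allI impI)
      show "w \<in> arr C" by (rule wA)
      show fA: "f \<in> arr C" using fF Fib_arr by auto
      fix \<alpha> \<beta> assume sq0: "\<alpha> \<in> hom C (src C w) (src C f) \<and> \<beta> \<in> hom C (tgt C w) (tgt C f) \<and>
         cmp C f \<alpha> = cmp C \<beta> w"
      then have al: "\<alpha> \<in> arr C" "src C \<alpha> = src C w" "tgt C \<alpha> = src C f"
        and be: "\<beta> \<in> arr C" "src C \<beta> = tgt C w" "tgt C \<beta> = tgt C f"
        and sq: "cmp C f \<alpha> = cmp C \<beta> w" by (auto simp: hom_def)
      have "cmp C f (cmp C \<alpha> a) = cmp C (cmp C \<beta> H) (cmp C k in1)"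
      proof -
        have "cmp C f (cmp C \<alpha> a) = cmp C \<beta> (cmp C w a)"
          using fA al aA be wA by (simp add: sq flip: assoc)
        also have "\<dots> = cmp C \<beta> (cmp C (cmp C H k) in1)" using H(2) T(2) by simp
        also have "\<dots> = cmp C (cmp C \<beta> H) (cmp C k in1)" using be HA kA sk inA by (simp add: assoc)
        finally show ?thesis .
      qed
      moreover have "cmp C \<alpha> a \<in> hom C (src C (cmp C k in1)) (src C f)"
        "cmp C \<beta> H \<in> hom C (tgt C (cmp C k in1)) (tgt C f)"
        using al aA be HA kA sk inA by (auto simp: hom_def)
      ultimately obtain G where G: "G \<in> hom C (tgt C (cmp C k in1)) (src C f)"
        "cmp C G (cmp C k in1) = cmp C \<alpha> a" "cmp C f G = cmp C \<beta> H"
        using acof_lift[OF ac fF] ff by blast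
      have GA: "G \<in> arr C" "src C G = tgt C k" "tgt C G = src C f" using G kA sk inA by (auto simp: hom_def)
      define h where "h = cmp C G (cmp C k in2)"
      have "h \<in> hom C (tgt C w) (src C f)" unfolding h_def using GA kA sk inA by (simp add: hom_def)
      moreover have "cmp C h w = \<alpha>"
      proof -
        have "cmp C h w = cmp C G (cmp C k (cmp C in1 w))" unfolding h_def
          using GA kA sk inA wA by (simp add: assoc pod(3))
        also have "\<dots> = cmp C (cmp C G (cmp C k in1)) w" using GA kA sk inA wA by (simp add: assoc)
        also have "\<dots> = \<alpha>" using G(2) al aA wA Pobj by (simp add: assoc a(3) id_r)
        finally show ?thesis .
      qed
      moreover have "cmp C f h = \<beta>"
      proof -
        have "cmp C f h = cmp C (cmp C f G) (cmp C k in2)" unfolding h_def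
          using GA kA sk inA fA by (simp add: assoc)
        also have "\<dots> = cmp C \<beta> (cmp C (cmp C H k) in2)" using G(3) be HA kA sk inA by (simp add: assoc)
        also have "\<dots> = \<beta>" using H(2) T(3) be by (simp add: id_r)
        finally show ?thesis .
      qed
      ultimately show "\<exists>h\<in>hom C (tgt C w) (src C f). cmp C h w = \<alpha> \<and> cmp C f h = \<beta>" by blast
    qed
  qed
qed

end


context setting
begin

lemma path_from_J:
  assumes fact: "factorization_condition C Cof Fib"
    and cylall: "\<forall>i\<in>Cof. cofibrant C Cof (src C i) \<and> fibrant C Fib (tgt C i) \<longrightarrow>
                has_rel_strong_cylinder C Cof Fib i"
    and J: "\<forall>j\<in>J. acyclic_cof C Cof Fib j"
    and Jfact: "\<forall>f\<in>arr C. cofibrant C Cof (src C f) \<and> fibrant C Fib (tgt C f) \<longrightarrow>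
                 (\<exists>j q. j \<in> J \<and> q \<in> Fib \<and> tgt C j = src C q \<and> f = cmp C q j)"
    and J23: "\<forall>i j. i \<in> J \<and> j \<in> Cof \<and> tgt C i = src C j \<and>
                 bifibrant C Cof Fib (src C i) \<and> bifibrant C Cof Fib (tgt C i) \<and>
                 bifibrant C Cof Fib (tgt C j) \<and>
                 acyclic_cof C Cof Fib (cmp C j i) \<longrightarrow>
                 acyclic_cof C Cof Fib j"
    and p: "p \<in> Fib" "cofibrant C Cof (src C p)" "fibrant C Fib (tgt C p)"
  shows "has_rel_strong_path C Cof Fib p"
proof -
  have pA: "p \<in> arr C" using p Fib_arr by auto
  have Yf: "fibrant C Fib (src C p)" using fibrant_src[OF p(3) p(1)] by simp
  obtain pr2 pr1 where pb: "is_pullback C p p pr2 pr1" and pr2F: "pr2 \<in> Fib"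
    using fib p pA Yf unfolding fibration_class_def by metis
  have pr1F: "pr1 \<in> Fib"
  proof -
    have "\<forall>p g. p \<in> Fib \<and> g \<in> arr C \<and> tgt C g = tgt C p \<and>
            fibrant C Fib (tgt C p) \<and> fibrant C Fib (src C g) \<longrightarrow>
        (\<forall>p' g'. is_pullback C p g p' g' \<longrightarrow> p' \<in> Fib)"
      using fib unfolding fibration_class_def by blast
    then show ?thesis using pb_sym[OF pb] p pA Yf by blast
  qed
  have pr: "pr2 \<in> hom C (src C pr1) (src C p)" "pr1 \<in> hom C (src C pr1) (src C p)"
    using pb unfolding is_pullback_def hom_def by auto
  have prA: "pr1 \<in> arr C" "pr2 \<in> arr C" "tgt C pr1 = src C p" "tgt C pr2 = src C p" "src C pr2 = src C pr1"
    using pr by (auto simp: hom_def)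
  have Yo: "src C p \<in> obj C" using pA by simp
  have idY: "ident C (src C p) \<in> hom C (src C p) (src C p)" using Yo by (simp add: hom_def)
  obtain \<delta> where d: "\<delta> \<in> hom C (src C p) (src C pr2)" "cmp C pr1 \<delta> = ident C (src C p)"
    "cmp C pr2 \<delta> = ident C (src C p)"
    using pb_ex[OF pb idY idY] by blast
  have dA: "\<delta> \<in> arr C" "src C \<delta> = src C p" "tgt C \<delta> = src C pr1" using d prA by (auto simp: hom_def)
  have Wf: "fibrant C Fib (src C pr1)" using fibrant_src[OF Yf pr1F prA(3)] .
  obtain s k where sJ: "s \<in> J" and kF: "k \<in> Fib" and sk: "tgt C s = src C k" and dks: "\<delta> = cmp C k s"
    using Jfact dA p(2) Wf by force
  have sa: "acyclic_cof C Cof Fib s" using J sJ by blast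
  have sC: "s \<in> Cof" using sa unfolding acyclic_cof_def by blast
  have sA: "s \<in> arr C" and kA: "k \<in> arr C" using sC kF Cof_arr Fib_arr by auto
  have ss: "src C s = src C p" and tk: "tgt C k = src C pr1" using dA dks sA kA sk by auto
  define qq where "qq = cmp C pr1 k"
  have qqF: "qq \<in> Fib" unfolding qq_def using Fib_cmp[OF kF pr1F tk] .
  have qqA: "qq \<in> arr C" "src C qq = src C k" "tgt C qq = src C p" unfolding qq_def
    using kA prA tk by auto
  have Pc: "cofibrant C Cof (src C k)" using cofibrant_tgt[OF p(2) sC ss] sk by simp
  have Pf: "fibrant C Fib (src C k)" using fibrant_src[OF Yf qqF qqA(3)] qqA by simp
  have qqs: "cmp C qq s = ident C (src C p)" unfolding qq_def using prA kA sA tk sk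
    by (simp add: assoc d(2) flip: dks)
  obtain c a where cC: "c \<in> Cof" and a: "acyclic_fib C Cof Fib a" and ca: "tgt C c = src C a"
    and qca: "qq = cmp C a c"
    using fact qqA Pc Pf Yf unfolding factorization_condition_def by force
  have aF: "a \<in> Fib" using a unfolding acyclic_fib_def by auto
  have cA: "c \<in> arr C" and aA: "a \<in> arr C" using cC aF Cof_arr Fib_arr by auto
  have sc: "src C c = src C k" and ta: "tgt C a = src C p" using qqA qca cA aA ca by auto
  have P'f: "fibrant C Fib (src C a)" using fibrant_src[OF Yf aF ta] .
  have P'c: "cofibrant C Cof (src C a)" using cofibrant_tgt[OF Pc cC sc] ca by simp
  have wC: "cmp C c s \<in> Cof" using Cof_cmp[OF sC cC] sk sc by simp
  have wst: "src C (cmp C c s) = src C p" "tgt C (cmp C c s) = src C a" using sA cA sk sc ss ca by auto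
  have "a \<in> hom C (tgt C (cmp C c s)) (src C (cmp C c s))" using aA wst ta by (simp add: hom_def)
  moreover have "cmp C a (cmp C c s) = ident C (src C (cmp C c s))"
    using aA cA sA ca sk sc wst qqs qca by (simp flip: assoc)
  ultimately have wac: "acyclic_cof C Cof Fib (cmp C c s)"
    using section_acyclic[OF cylall wC] wst p(2) P'f a by simp
  have cac: "acyclic_cof C Cof Fib c"
    using J23 sJ cC sk sc wac p(2) Yf Pc Pf P'c P'f ss ca unfolding bifibrant_def by metis
  have "ident C (src C k) \<in> hom C (src C c) (src C qq)" "a \<in> hom C (tgt C c) (tgt C qq)"
    using Pc qqA sc ca aA ta unfolding cofibrant_def by (auto simp: hom_def)
  moreover have "cmp C qq (ident C (src C k)) = cmp C a c" using qqA qca by (simp add: id_r)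
  ultimately obtain r where r: "r \<in> hom C (tgt C c) (src C qq)" "cmp C r c = ident C (src C k)"
    "cmp C qq r = a"
    using acof_lift[OF cac qqF] Pf Yf qqA by force
  have rA: "r \<in> arr C" "src C r = src C a" "tgt C r = src C k" using r ca qqA by (auto simp: hom_def)
  have qqaf: "acyclic_fib C Cof Fib qq"
    unfolding acyclic_fib_def
  proof (intro conjI ballI impI)
    show "qq \<in> Fib" by (rule qqF)
    fix m assume mC: "m \<in> Cof" and mc: "cofibrant C Cof (src C m) \<and> cofibrant C Cof (tgt C m)"
    show "llp C m qq" unfolding llp_def
    proof (intro conjI allI impI)
      show mA: "m \<in> arr C" using mC Cof_arr by auto
      show "qq \<in> arr C" by (rule qqA(1))
      fix \<alpha> \<beta> assume sq0: "\<alpha> \<in> hom C (src C m) (src C qq) \<and> \<beta> \<in> hom C (tgt C m) (tgt C qq) \<and>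
         cmp C qq \<alpha> = cmp C \<beta> m"
      then have al: "\<alpha> \<in> arr C" "src C \<alpha> = src C m" "tgt C \<alpha> = src C k"
        and be: "\<beta> \<in> hom C (tgt C m) (tgt C a)"
        and sq: "cmp C qq \<alpha> = cmp C \<beta> m" using qqA ta by (auto simp: hom_def)
      have "cmp C c \<alpha> \<in> hom C (src C m) (src C a)" using cA al sc ca by (simp add: hom_def)
      moreover have "cmp C a (cmp C c \<alpha>) = cmp C \<beta> m" using aA cA al sc ca sq qca
        by (simp flip: assoc)
      ultimately obtain l where l: "l \<in> hom C (tgt C m) (src C a)" "cmp C l m = cmp C c \<alpha>"
        "cmp C a l = \<beta>"
        using afib_lift[OF a mC] mc be by blast
      have lA: "l \<in> arr C" "src C l = tgt C m" "tgt C l = src C a" using l by (auto simp: hom_def)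
      have "cmp C r l \<in> hom C (tgt C m) (src C qq)" using rA lA qqA by (simp add: hom_def)
      moreover have "cmp C (cmp C r l) m = \<alpha>"
      proof -
        have "cmp C (cmp C r l) m = cmp C r (cmp C c \<alpha>)" using rA lA mA by (simp add: assoc l(2))
        also have "\<dots> = cmp C (cmp C r c) \<alpha>" using rA cA al sc ca by (simp add: assoc)
        also have "\<dots> = \<alpha>" using r(2) al by (simp add: id_l)
        finally show ?thesis .
      qed
      moreover have "cmp C qq (cmp C r l) = \<beta>"
        using qqA rA lA by (simp add: r(3) l(3) flip: assoc)
      ultimately show "\<exists>h\<in>hom C (tgt C m) (src C qq). cmp C h m = \<alpha> \<and> cmp C qq h = \<beta>" by blast
    qed
  qed
  have X: "s \<in> hom C (src C p) (src C k)" "cmp C pr1 (cmp C k s) = ident C (src C p)"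
    "cmp C pr2 (cmp C k s) = ident C (src C p)" "acyclic_fib C Cof Fib (cmp C pr1 k)"
    using sA ss sk d dks qqaf unfolding qq_def by (auto simp: hom_def)
  show ?thesis unfolding has_rel_strong_path_def
    using pb kA tk kF X by blast
qed

end

theorem proposition2p3p3:
  fixes C :: "('o, 'm) cat" and Cof Fib :: "'m set"
  assumes cat: "is_category C"
    and cof: "cofibration_class C Cof"
    and fib: "fibration_class C Fib"
    and fact: "factorization_condition C Cof Fib"
    and cyl: "\<forall>i\<in>Cof. cofibrant C Cof (src C i) \<and> fibrant C Fib (tgt C i) \<longrightarrow>
                has_rel_strong_cylinder C Cof Fib i"
  shows "((\<forall>p\<in>Fib. cofibrant C Cof (src C p) \<and> fibrant C Fib (tgt C p) \<longrightarrow>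
              has_rel_strong_path C Cof Fib p)
          \<longleftrightarrow>
          (\<forall>i j. i \<in> Cof \<and> j \<in> Cof \<and> tgt C i = src C j \<and>
              bifibrant C Cof Fib (src C i) \<and> bifibrant C Cof Fib (tgt C i) \<and>
              bifibrant C Cof Fib (tgt C j) \<and>
              acyclic_cof C Cof Fib i \<and> acyclic_cof C Cof Fib (cmp C j i) \<longrightarrow>
              acyclic_cof C Cof Fib j))
       \<and>
         ((\<forall>p\<in>Fib. cofibrant C Cof (src C p) \<and> fibrant C Fib (tgt C p) \<longrightarrow>
              has_rel_strong_path C Cof Fib p)
          \<longleftrightarrow>
          (\<exists>J. (\<forall>j\<in>J. acyclic_cof C Cof Fib j) \<and>
              (\<forall>f\<in>arr C. cofibrant C Cof (src C f) \<and> fibrant C Fib (tgt C f) \<longrightarrow>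
                 (\<exists>j q. j \<in> J \<and> q \<in> Fib \<and> tgt C j = src C q \<and> f = cmp C q j)) \<and>
              (\<forall>i j. i \<in> J \<and> j \<in> Cof \<and> tgt C i = src C j \<and>
                 bifibrant C Cof Fib (src C i) \<and> bifibrant C Cof Fib (tgt C i) \<and>
                 bifibrant C Cof Fib (tgt C j) \<and>
                 acyclic_cof C Cof Fib (cmp C j i) \<longrightarrow>
                 acyclic_cof C Cof Fib j)))"
proof -
  interpret setting C Cof Fib using cat cof fib by unfold_locales
  let ?A = "\<forall>p\<in>Fib. cofibrant C Cof (src C p) \<and> fibrant C Fib (tgt C p) \<longrightarrow>
              has_rel_strong_path C Cof Fib p"
  let ?B = "\<forall>i j. i \<in> Cof \<and> j \<in> Cof \<and> tgt C i = src C j \<and>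
              bifibrant C Cof Fib (src C i) \<and> bifibrant C Cof Fib (tgt C i) \<and>
              bifibrant C Cof Fib (tgt C j) \<and>
              acyclic_cof C Cof Fib i \<and> acyclic_cof C Cof Fib (cmp C j i) \<longrightarrow>
              acyclic_cof C Cof Fib j"
  let ?Cc = "\<exists>J. (\<forall>j\<in>J. acyclic_cof C Cof Fib j) \<and>
              (\<forall>f\<in>arr C. cofibrant C Cof (src C f) \<and> fibrant C Fib (tgt C f) \<longrightarrow>
                 (\<exists>j q. j \<in> J \<and> q \<in> Fib \<and> tgt C j = src C q \<and> f = cmp C q j)) \<and>
              (\<forall>i j. i \<in> J \<and> j \<in> Cof \<and> tgt C i = src C j \<and>
                 bifibrant C Cof Fib (src C i) \<and> bifibrant C Cof Fib (tgt C i) \<and>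
                 bifibrant C Cof Fib (tgt C j) \<and>
                 acyclic_cof C Cof Fib (cmp C j i) \<longrightarrow>
                 acyclic_cof C Cof Fib j)"
  have AB: ?B if A: ?A
  proof (intro allI impI)
    fix i j
    assume h: "i \<in> Cof \<and> j \<in> Cof \<and> tgt C i = src C j \<and>
              bifibrant C Cof Fib (src C i) \<and> bifibrant C Cof Fib (tgt C i) \<and>
              bifibrant C Cof Fib (tgt C j) \<and>
              acyclic_cof C Cof Fib i \<and> acyclic_cof C Cof Fib (cmp C j i)"
    then have j: "j \<in> Cof" "tgt C i = src C j" "cofibrant C Cof (src C j)" "cofibrant C Cof (tgt C j)"
      and i: "acyclic_cof C Cof Fib i" and ji: "acyclic_cof C Cof Fib (cmp C j i)"
      unfolding bifibrant_def by auto
    show "acyclic_cof C Cof Fib j" unfolding acyclic_cof_def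
      using reduce[OF A fact i j ji] j(1) by blast
  qed
  have BC: ?Cc if B: ?B
  proof (intro exI[of _ "{j. acyclic_cof C Cof Fib j}"] conjI)
    show "\<forall>j\<in>{j. acyclic_cof C Cof Fib j}. acyclic_cof C Cof Fib j" by blast
    show "\<forall>f\<in>arr C. cofibrant C Cof (src C f) \<and> fibrant C Fib (tgt C f) \<longrightarrow>
                 (\<exists>j q. j \<in> {j. acyclic_cof C Cof Fib j} \<and> q \<in> Fib \<and> tgt C j = src C q \<and> f = cmp C q j)"
      using fact unfolding factorization_condition_def by blast
    show "\<forall>i j. i \<in> {j. acyclic_cof C Cof Fib j} \<and> j \<in> Cof \<and> tgt C i = src C j \<and>
                 bifibrant C Cof Fib (src C i) \<and> bifibrant C Cof Fib (tgt C i) \<and>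
                 bifibrant C Cof Fib (tgt C j) \<and>
                 acyclic_cof C Cof Fib (cmp C j i) \<longrightarrow>
                 acyclic_cof C Cof Fib j"
      using B unfolding acyclic_cof_def[of C Cof Fib i for i] by blast
  qed
  have CA: ?A if Cc: ?Cc
  proof -
    from Cc obtain J where J: "\<forall>j\<in>J. acyclic_cof C Cof Fib j"
      and Jf: "\<forall>f\<in>arr C. cofibrant C Cof (src C f) \<and> fibrant C Fib (tgt C f) \<longrightarrow>
                 (\<exists>j q. j \<in> J \<and> q \<in> Fib \<and> tgt C j = src C q \<and> f = cmp C q j)"
      and J23: "\<forall>i j. i \<in> J \<and> j \<in> Cof \<and> tgt C i = src C j \<and>
                 bifibrant C Cof Fib (src C i) \<and> bifibrant C Cof Fib (tgt C i) \<and>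
                 bifibrant C Cof Fib (tgt C j) \<and>
                 acyclic_cof C Cof Fib (cmp C j i) \<longrightarrow>
                 acyclic_cof C Cof Fib j" by blast
    show ?thesis using path_from_J[OF fact cyl J Jf J23] by blast
  qed
  show ?thesis using AB BC CA by blast
qed

end
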